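(* Let $p, \sigma \in \mathbb{R}$. The equation \[ -u''(x) = |x|^\sigma u(x)^p \quad \text{in } \mathbb{R} \] admits at least one non-trivial, non-negative classical solution if and only if one of the following holds: (1) $\sigma < -2$ and $p > -1-\sigma$; or (2) $-2 < \sigma < 0$ and $p < -1-\sigma$.
   Context: A classical solution is a function $u$ belonging to $C^2(\mathbb{R})$ if $\sigma \geq 0$, and to $C(\mathbb{R}) \cap C^2(\mathbb{R} \setminus \{0\})$ if $\sigma < 0$, such that the equation holds pointwise for all $x \in \mathbb{R}$ when $\sigma \geq 0$ and for all $x \neq 0$ when $\sigma < 0$. For $p=0$ the term $u^p$ is understood as $1$, and for $p<0$ it is required that $u>0$ at each point where the equation is imposed. *)

theory Defs
  imports Complex_Main
begin

text \<open>The weight |x|^sigma, with the convention 0^0 = 1 (Isabelle's powr has 0 powr 0 = 0).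
  For sigma < 0 it is only used at x <> 0.\<close>
definition weight :: "real \<Rightarrow> real \<Rightarrow> real" where
  "weight \<sigma> x = (if \<sigma> = 0 then 1 else \<bar>x\<bar> powr \<sigma>)"

text \<open>The nonlinearity t^p for t >= 0 (t > 0 when p < 0); t^0 is understood as 1.\<close>
definition upow :: "real \<Rightarrow> real \<Rightarrow> real" where
  "upow t p = (if p = 0 then 1 else t powr p)"

definition sol_domain :: "real \<Rightarrow> real set" where
  "sol_domain \<sigma> = (if \<sigma> \<ge> 0 then UNIV else - {0})"

definition classical_solution :: "real \<Rightarrow> real \<Rightarrow> (real \<Rightarrow> real) \<Rightarrow> bool" where
  "classical_solution \<sigma> p u \<longleftrightarrow>
     continuous_on UNIV u \<and>
     (\<exists>u' u''. \<forall>x \<in> sol_domain \<sigma>.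
        (u has_real_derivative u' x) (at x) \<and>
        (u' has_real_derivative u'' x) (at x) \<and>
        isCont u'' x \<and>
        (p < 0 \<longrightarrow> u x > 0) \<and>
        - u'' x = weight \<sigma> x * upow (u x) p)"

end

theory Submission
  imports Defs
begin

lemma concave_tangent:
  fixes f f' f'' :: "real \<Rightarrow> real"
  assumes ab: "a \<le> b"
    and d1: "\<And>x. a \<le> x \<Longrightarrow> x \<le> b \<Longrightarrow> (f has_real_derivative f' x) (at x)"
    and d2: "\<And>x. a \<le> x \<Longrightarrow> x \<le> b \<Longrightarrow> (f' has_real_derivative f'' x) (at x)"
    and neg: "\<And>x. a \<le> x \<Longrightarrow> x \<le> b \<Longrightarrow> f'' x \<le> 0"
  shows "f b \<le> f a + f' a * (b - a)" "f a \<le> f b + f' b * (a - b)"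
proof -
  have mono: "f' y \<le> f' x" if "a \<le> x" "x \<le> y" "y \<le> b" for x y
    using DERIV_nonpos_imp_nonincreasing[of x y f'] that d2 neg by force
  have "(\<lambda>x. f x - f' a * x) b \<le> (\<lambda>x. f x - f' a * x) a"
  proof (rule DERIV_nonpos_imp_nonincreasing[OF ab])
    fix x assume x: "a \<le> x" "x \<le> b"
    show "\<exists>y. ((\<lambda>x. f x - f' a * x) has_real_derivative y) (at x) \<and> y \<le> 0"
      by (rule exI[of _ "f' x - f' a"]) (auto intro!: derivative_eq_intros d1 x mono)
  qed
  then show "f b \<le> f a + f' a * (b - a)" by (simp add: algebra_simps)
  have "(\<lambda>x. f x - f' b * x) a \<le> (\<lambda>x. f x - f' b * x) b"
  proof (rule DERIV_nonneg_imp_nondecreasing[OF ab])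
    fix x assume x: "a \<le> x" "x \<le> b"
    show "\<exists>y. ((\<lambda>x. f x - f' b * x) has_real_derivative y) (at x) \<and> y \<ge> 0"
      by (rule exI[of _ "f' x - f' b"]) (auto intro!: derivative_eq_intros d1 x mono)
  qed
  then show "f a \<le> f b + f' b * (a - b)" by (simp add: algebra_simps)
qed

lemma powr_big_at_top:
  fixes e x0 M :: real
  assumes "e > 0"
  shows "\<exists>t\<ge>x0. t > 0 \<and> t powr e \<ge> M"
proof -
  define t where "t = max x0 (max M 1 powr (1/e))"
  have p: "max M 1 powr (1/e) > 0" by simp
  have "t powr e \<ge> (max M 1 powr (1/e)) powr e"
    using assms p by (intro powr_mono2) (auto simp: t_def)
  also have "(max M 1 powr (1/e)) powr e = max M 1"
    using assms by (simp add: powr_powr)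
  finally have "t powr e \<ge> M" by simp
  moreover have "t > 0" using p unfolding t_def by linarith
  ultimately show ?thesis by (intro exI[of _ t]) (auto simp: t_def)
qed

lemma powr_big_at_zero:
  fixes e x0 M :: real
  assumes "e < 0" "x0 > 0"
  shows "\<exists>t. 0 < t \<and> t \<le> x0 \<and> t powr e \<ge> M"
proof -
  define t where "t = min x0 (max M 1 powr (1/e))"
  have p: "max M 1 powr (1/e) > 0" by simp
  have tp: "t > 0" using p assms by (simp add: t_def)
  have "t powr e \<ge> (max M 1 powr (1/e)) powr e"
    using assms p tp by (intro powr_mono2') (auto simp: t_def)
  also have "(max M 1 powr (1/e)) powr e = max M 1"
    using assms by (simp add: powr_powr)
  finally show ?thesis using tp by (intro exI[of _ t]) (auto simp: t_def)
qed

lemma div_inf: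
  fixes d dd :: "real \<Rightarrow> real"
  assumes x0: "x0 > 0" and c: "c > 0" and be: "\<beta> \<ge> -1"
    and der: "\<And>t. t \<ge> x0 \<Longrightarrow> (d has_real_derivative dd t) (at t)"
    and bd: "\<And>t. t \<ge> x0 \<Longrightarrow> dd t \<le> - c * t powr \<beta>"
    and pos: "\<And>t. t \<ge> x0 \<Longrightarrow> d t > 0"
  shows False
proof (cases "\<beta> = -1")
  case True
  define F where "F t = d t + c * ln t" for t
  have Fm: "F t \<le> F x0" if "t \<ge> x0" for t
  proof (rule DERIV_nonpos_imp_nonincreasing[OF that])
    fix x assume x: "x0 \<le> x" "x \<le> t"
    have "x powr \<beta> = 1 / x" using True x x0 by (simp add: powr_minus_divide)
    then have "dd x + c * (1 / x) \<le> 0" using bd[of x] x by simp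
    then show "\<exists>y. (F has_real_derivative y) (at x) \<and> y \<le> 0"
      unfolding F_def using x x0
      by (intro exI[of _ "dd x + c * (1 / x)"]) (auto intro!: derivative_eq_intros der)
  qed
  define t where "t = max x0 (exp (F x0 / c))"
  have t: "t \<ge> x0" "t > 0" using x0 by (auto simp: t_def)
  have "ln t \<ge> F x0 / c"
    using t by (simp add: t_def ln_ge_iff)
  then have "c * ln t \<ge> F x0" using c by (simp add: field_simps)
  with Fm[OF t(1)] pos[OF t(1)] show False by (simp add: F_def)
next
  case False
  then have be1: "\<beta> + 1 > 0" using be by simp
  define F where "F t = d t + c * (t powr (\<beta> + 1) / (\<beta> + 1))" for t
  have Fm: "F t \<le> F x0" if "t \<ge> x0" for t
  proof (rule DERIV_nonpos_imp_nonincreasing[OF that])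
    fix x assume x: "x0 \<le> x" "x \<le> t"
    have "dd x + c * x powr \<beta> \<le> 0" using bd[of x] x by simp
    moreover have "(F has_real_derivative dd x + c * x powr \<beta>) (at x)"
      unfolding F_def using x x0 be1
      by (auto intro!: derivative_eq_intros der)
    ultimately show "\<exists>y. (F has_real_derivative y) (at x) \<and> y \<le> 0" by blast
  qed
  obtain t where t: "t \<ge> x0" "t > 0" "t powr (\<beta> + 1) \<ge> (\<beta> + 1) * F x0 / c"
    using powr_big_at_top[OF be1] by blast
  have "c * (t powr (\<beta> + 1) / (\<beta> + 1)) \<ge> F x0"
    using t(3) c be1 by (simp add: field_simps)
  with Fm[OF t(1)] pos[OF t(1)] show False by (simp add: F_def)
qed

lemma conv_inf:
  fixes d dd :: "real \<Rightarrow> real"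
  assumes x0: "x0 > 0" and c: "c > 0" and be: "\<beta> < -1"
    and der: "\<And>t. t \<ge> x0 \<Longrightarrow> (d has_real_derivative dd t) (at t)"
    and bd: "\<And>t. t \<ge> x0 \<Longrightarrow> dd t \<le> - c * t powr \<beta>"
    and pos: "\<And>t. t \<ge> x0 \<Longrightarrow> d t > 0"
  shows "d x0 \<ge> c * x0 powr (\<beta> + 1) / (- \<beta> - 1)"
proof -
  have be1: "\<beta> + 1 < 0" using be by simp
  define F where "F t = d t + c * (t powr (\<beta> + 1) / (\<beta> + 1))" for t
  have Fm: "F t \<le> F x0" if "t \<ge> x0" for t
  proof (rule DERIV_nonpos_imp_nonincreasing[OF that])
    fix x assume x: "x0 \<le> x" "x \<le> t"
    have "dd x + c * x powr \<beta> \<le> 0" using bd[of x] x by simp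
    moreover have "(F has_real_derivative dd x + c * x powr \<beta>) (at x)"
      unfolding F_def using x x0 be1
      by (auto intro!: derivative_eq_intros der)
    ultimately show "\<exists>y. (F has_real_derivative y) (at x) \<and> y \<le> 0" by blast
  qed
  have lim: "((\<lambda>t. c * (t powr (\<beta> + 1) / (\<beta> + 1))) \<longlongrightarrow> c * (0 / (\<beta> + 1))) at_top"
    apply (intro tendsto_intros tendsto_neg_powr[OF be1] filterlim_ident)
    using be1 by simp
  have "c * (0 / (\<beta> + 1)) \<le> F x0"
  proof (rule tendsto_le[OF _ tendsto_const lim])
    show "\<forall>\<^sub>F t in at_top. c * (t powr (\<beta> + 1) / (\<beta> + 1)) \<le> F x0"
      using eventually_ge_at_top[of x0]
    proof eventually_elim
      case (elim t)
      then show ?case using Fm[OF elim] pos[OF elim] by (simp add: F_def)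
    qed
  qed simp
  then have "0 \<le> d x0 + c * (x0 powr (\<beta> + 1) / (\<beta> + 1))" by (simp add: F_def)
  then show ?thesis using be1 by (simp add: field_simps)
qed

lemma div_zero:
  fixes u d dd :: "real \<Rightarrow> real"
  assumes x0: "x0 > 0" and c: "c > 0" and be: "\<beta> \<le> -2"
    and der1: "\<And>t. 0 < t \<Longrightarrow> t \<le> x0 \<Longrightarrow> (u has_real_derivative d t) (at t)"
    and der2: "\<And>t. 0 < t \<Longrightarrow> t \<le> x0 \<Longrightarrow> (d has_real_derivative dd t) (at t)"
    and bd: "\<And>t. 0 < t \<Longrightarrow> t \<le> x0 \<Longrightarrow> dd t \<le> - c * t powr \<beta>"
    and pos: "\<And>t. 0 < t \<Longrightarrow> t \<le> x0 \<Longrightarrow> u t > 0"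
  shows False
proof (cases "\<beta> = -2")
  case True
  define H where "H t = u t - c * ln t" for t
  define Hd where "Hd t = d t - c / t" for t
  have tang: "H t \<le> H x0 + Hd x0 * (t - x0)" if t: "0 < t" "t \<le> x0" for t
  proof (rule concave_tangent(2)[OF t(2)])
    fix x assume x: "t \<le> x" "x \<le> x0"
    have "(H has_real_derivative d x - c * (1 / x)) (at x)"
      unfolding H_def using x t der1[of x]
      by (intro derivative_eq_intros) auto
    then show "(H has_real_derivative Hd x) (at x)"
      by (simp add: Hd_def)
    have "(Hd has_real_derivative dd x - (0 * x - c * 1) / (x * x)) (at x)"
      unfolding Hd_def using x t der2[of x]
      by (intro derivative_eq_intros) auto
    then show "(Hd has_real_derivative dd x + c / x^2) (at x)"
      by (simp add: power2_eq_square)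
    have "x powr 2 = x^2" using x t by (simp add: powr_numeral)
    then have "x powr \<beta> = 1 / x^2" using True
      by (simp add: powr_minus_divide)
    then show "dd x + c / x^2 \<le> 0" using bd[of x] x t by simp
  qed
  define M where "M = H x0 + \<bar>Hd x0\<bar> * x0"
  have bnd: "- c * ln t < M" if t: "0 < t" "t \<le> x0" for t
  proof -
    have "Hd x0 * (t - x0) \<le> \<bar>Hd x0\<bar> * x0"
    proof -
      have "Hd x0 * (t - x0) \<le> \<bar>Hd x0 * (t - x0)\<bar>" by simp
      also have "\<dots> = \<bar>Hd x0\<bar> * \<bar>t - x0\<bar>" by (simp add: abs_mult)
      also have "\<dots> \<le> \<bar>Hd x0\<bar> * x0" using t by (intro mult_left_mono) auto
      finally show ?thesis .
    qed
    then show ?thesis using tang[OF t] pos[OF t] by (simp add: H_def M_def)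
  qed
  define t where "t = min x0 (exp (- M / c - 1))"
  have t: "0 < t" "t \<le> x0" using x0 by (auto simp: t_def)
  have "t \<le> exp (- M / c - 1)" by (simp add: t_def)
  then have "ln t \<le> ln (exp (- M / c - 1))" using t by (subst ln_le_cancel_iff) auto
  then have "ln t \<le> - M / c - 1" by simp
  then have "c * ln t \<le> c * (- M / c - 1)" using c by (intro mult_left_mono) auto
  also have "\<dots> = - M - c" using c by (simp add: field_simps)
  finally show False using bnd[OF t] c by simp
next
  case False
  then have be2: "\<beta> + 2 < 0" using be by simp
  have be12: "(\<beta> + 1) * (\<beta> + 2) > 0" using be2 by (intro mult_neg_neg) auto
  have nz: "\<beta> + 1 \<noteq> 0" "\<beta> + 2 \<noteq> 0" using be2 by auto
  define H where "H t = u t + c * (t powr (\<beta> + 2) / ((\<beta> + 1) * (\<beta> + 2)))" for t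
  define Hd where "Hd t = d t + c * (t powr (\<beta> + 1) / (\<beta> + 1))" for t
  have tang: "H t \<le> H x0 + Hd x0 * (t - x0)" if t: "0 < t" "t \<le> x0" for t
  proof (rule concave_tangent(2)[OF t(2)])
    fix x assume x: "t \<le> x" "x \<le> x0"
    have e: "(\<beta> + 2) * x powr (\<beta> + 2 - 1) / ((\<beta> + 1) * (\<beta> + 2)) = x powr (\<beta> + 1) / (\<beta> + 1)"
      using nz by (simp add: add.commute)
    show "(H has_real_derivative Hd x) (at x)"
      unfolding H_def Hd_def using x t e nz
      by (auto intro!: derivative_eq_intros der1)
    have e2: "(\<beta> + 1) * x powr (\<beta> + 1 - 1) / (\<beta> + 1) = x powr \<beta>"
      using nz by (simp add: field_simps)
    show "(Hd has_real_derivative dd x + c * x powr \<beta>) (at x)"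
      unfolding Hd_def using x t e2 nz
      by (auto intro!: derivative_eq_intros der2)
    show "dd x + c * x powr \<beta> \<le> 0" using bd[of x] x t by simp
  qed
  define M where "M = H x0 + \<bar>Hd x0\<bar> * x0"
  have bnd: "c * (t powr (\<beta> + 2) / ((\<beta> + 1) * (\<beta> + 2))) < M" if t: "0 < t" "t \<le> x0" for t
  proof -
    have "Hd x0 * (t - x0) \<le> \<bar>Hd x0\<bar> * x0"
    proof -
      have "Hd x0 * (t - x0) \<le> \<bar>Hd x0 * (t - x0)\<bar>" by simp
      also have "\<dots> = \<bar>Hd x0\<bar> * \<bar>t - x0\<bar>" by (simp add: abs_mult)
      also have "\<dots> \<le> \<bar>Hd x0\<bar> * x0" using t by (intro mult_left_mono) auto
      finally show ?thesis .
    qed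
    then show ?thesis using tang[OF t] pos[OF t] by (simp add: H_def M_def)
  qed
  obtain t where t: "0 < t" "t \<le> x0" "t powr (\<beta> + 2) \<ge> M * ((\<beta> + 1) * (\<beta> + 2)) / c"
    using powr_big_at_zero[OF be2 x0] by blast
  have "c * (t powr (\<beta> + 2) / ((\<beta> + 1) * (\<beta> + 2))) \<ge> M"
    using t(3) c be12 by (simp add: field_simps)
  then show False using bnd[OF t(1,2)] by simp
qed

lemma conv_zero:
  fixes u d dd :: "real \<Rightarrow> real"
  assumes y: "y > 0" and c: "c > 0" and be: "\<beta> > -2"
    and der1: "\<And>t. 0 < t \<Longrightarrow> t \<le> y \<Longrightarrow> (u has_real_derivative d t) (at t)"
    and der2: "\<And>t. 0 < t \<Longrightarrow> t \<le> y \<Longrightarrow> (d has_real_derivative dd t) (at t)"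
    and bd: "\<And>t. 0 < t \<Longrightarrow> t \<le> y \<Longrightarrow> dd t \<le> - c * t powr \<beta>"
    and g0: "\<And>t. 0 < t \<Longrightarrow> t \<le> y \<Longrightarrow> t * d t \<le> u t"
  shows "u y - y * d y \<ge> c * (y powr (\<beta> + 2) / (\<beta> + 2))"
proof -
  have be2: "\<beta> + 2 > 0" using be by simp
  define G where "G t = u t - t * d t - c * (t powr (\<beta> + 2) / (\<beta> + 2))" for t
  have Gm: "G s \<le> G y" if s: "0 < s" "s \<le> y" for s
  proof (rule DERIV_nonneg_imp_nondecreasing[OF s(2)])
    fix x assume x: "s \<le> x" "x \<le> y"
    have xp: "x > 0" using x s by simp
    have e: "(\<beta> + 2) * x powr (\<beta> + 2 - 1) / (\<beta> + 2) = x powr (\<beta> + 1)"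
      using be2 by (simp add: field_simps)
    have "(G has_real_derivative d x - (d x + x * dd x) - c * x powr (\<beta> + 1)) (at x)"
      unfolding G_def using x xp e
      by (auto intro!: derivative_eq_intros der1 der2)
    moreover have "x * dd x \<le> x * (- c * x powr \<beta>)"
      using bd[of x] xp x by (intro mult_left_mono) auto
    moreover have "x * x powr \<beta> = x powr (\<beta> + 1)"
      using xp by (simp add: powr_add)
    ultimately show "\<exists>z. (G has_real_derivative z) (at x) \<and> z \<ge> 0"
      by (intro exI[of _ "d x - (d x + x * dd x) - c * x powr (\<beta> + 1)"]) (auto simp: algebra_simps)
  qed
  have lim: "((\<lambda>s. - c * (s powr (\<beta> + 2) / (\<beta> + 2))) \<longlongrightarrow> - c * (0 / (\<beta> + 2))) (at_right 0)"
    apply (intro tendsto_intros tendsto_zero_powrI[of "\<lambda>s. s"])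
    using be2 by (auto simp: eventually_at_right_field intro!: exI[of _ 1])
  have "- c * (0 / (\<beta> + 2)) \<le> G y"
  proof (rule tendsto_le[OF _ tendsto_const lim])
    have ev: "\<forall>\<^sub>F s in at_right 0. 0 < s \<and> s < y"
      using y by (auto simp: eventually_at_right_field intro!: exI[of _ y])
    show "\<forall>\<^sub>F s in at_right 0. - c * (s powr (\<beta> + 2) / (\<beta> + 2)) \<le> G y"
      using ev
    proof eventually_elim
      case (elim s)
      then show ?case using Gm[of s] g0[of s] by (simp add: G_def)
    qed
  qed simp
  then show ?thesis by (simp add: G_def)
qed

locale halfline =
  fixes u d dd :: "real \<Rightarrow> real" and \<sigma> p :: real
  assumes der1: "\<And>x. 0 < x \<Longrightarrow> (u has_real_derivative d x) (at x)"
    and der2: "\<And>x. 0 < x \<Longrightarrow> (d has_real_derivative dd x) (at x)"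
    and pos: "\<And>x. 0 < x \<Longrightarrow> u x > 0"
    and dpos: "\<And>x. 0 < x \<Longrightarrow> d x > 0"
    and g0: "\<And>x. 0 < x \<Longrightarrow> x * d x \<le> u x"
    and eq: "\<And>x. 0 < x \<Longrightarrow> dd x = - (x powr \<sigma> * u x powr p)"
begin

lemma ddneg: "0 < x \<Longrightarrow> dd x < 0"
  using eq[of x] pos[of x] by simp

lemma umono: "0 < x \<Longrightarrow> x \<le> y \<Longrightarrow> u x \<le> u y"
  using DERIV_nonneg_imp_nondecreasing[of x y u] der1 dpos
  by (metis less_eq_real_def less_le_trans)

lemma vmono: assumes "0 < x" "x \<le> y" shows "u y / y \<le> u x / x"
proof (rule DERIV_nonpos_imp_nonincreasing[OF assms(2)])
  fix t assume t: "x \<le> t" "t \<le> y"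
  then have tp: "t > 0" using assms by simp
  have "((\<lambda>t. u t / t) has_real_derivative (d t * t - u t * 1) / (t * t)) (at t)"
    using tp der1[OF tp] by (intro derivative_eq_intros) auto
  moreover have "(d t * t - u t * 1) / (t * t) \<le> 0"
    using g0[OF tp] tp by (intro divide_nonpos_nonneg) (auto simp: mult.commute)
  ultimately show "\<exists>z. ((\<lambda>t. u t / t) has_real_derivative z) (at t) \<and> z \<le> 0" by blast
qed

lemma tangent1: assumes "1 \<le> t" shows "u t \<le> u 1 + d 1 * (t - 1)"
  using concave_tangent(1)[OF assms, of u d dd] der1 der2 ddneg
  by (meson less_eq_real_def less_le_trans zero_less_one)

lemma caseA: assumes "p < 0" "\<sigma> + p \<ge> -1" shows False
proof -
  define M where "M = u 1 + d 1"
  have M: "M > 0" using pos[of 1] dpos[of 1] by (simp add: M_def)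
  show False
  proof (rule div_inf[of 1 "M powr p" "\<sigma> + p" d dd])
    fix t :: real assume t: "1 \<le> t"
    then have tp: "t > 0" by simp
    show "(d has_real_derivative dd t) (at t)" using der2 tp by simp
    show "d t > 0" using dpos tp by simp
    have "u t \<le> M * t"
    proof -
      have "u 1 \<le> u 1 * t" using t pos[of 1] by simp
      moreover have "d 1 * (t - 1) \<le> d 1 * t" using dpos[of 1] by simp
      ultimately show ?thesis using tangent1[OF t] by (simp add: M_def algebra_simps)
    qed
    then have "(M * t) powr p \<le> u t powr p"
      using powr_mono2'[of p "u t" "M * t"] assms pos[OF tp] by simp
    then have "t powr \<sigma> * (M * t) powr p \<le> t powr \<sigma> * u t powr p"
      by (intro mult_left_mono) auto
    moreover have "t powr \<sigma> * (M * t) powr p = M powr p * t powr (\<sigma> + p)"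
      using M tp by (simp add: powr_mult powr_add)
    ultimately show "dd t \<le> - (M powr p) * t powr (\<sigma> + p)"
      using eq[OF tp] by simp
  qed (use M assms in auto)
qed

lemma caseB: assumes "p \<ge> 0" "\<sigma> \<ge> -1" shows False
proof (rule div_inf[of 1 "u 1 powr p" \<sigma> d dd])
  fix t :: real assume t: "1 \<le> t"
  then have tp: "t > 0" by simp
  show "(d has_real_derivative dd t) (at t)" using der2 tp by simp
  show "d t > 0" using dpos tp by simp
  have "u 1 powr p \<le> u t powr p"
    using powr_mono2[of p "u 1" "u t"] assms umono[of 1 t] t pos[of 1] by simp
  then have "t powr \<sigma> * u 1 powr p \<le> t powr \<sigma> * u t powr p"
    by (intro mult_left_mono) auto
  then show "dd t \<le> - (u 1 powr p) * t powr \<sigma>"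
    using eq[OF tp] by (simp add: mult.commute)
qed (use pos[of 1] assms in auto)

lemma caseE: assumes "p \<le> 0" "\<sigma> \<le> -2" shows False
proof (rule div_zero[of 1 "u 1 powr p" \<sigma> u d dd])
  fix t :: real assume t: "0 < t" "t \<le> 1"
  show "(u has_real_derivative d t) (at t)" using der1 t by simp
  show "(d has_real_derivative dd t) (at t)" using der2 t by simp
  show "u t > 0" using pos t by simp
  have "u 1 powr p \<le> u t powr p"
    using powr_mono2'[of p "u t" "u 1"] assms umono[of t 1] t pos[of t] by simp
  then have "t powr \<sigma> * u 1 powr p \<le> t powr \<sigma> * u t powr p"
    by (intro mult_left_mono) auto
  then show "dd t \<le> - (u 1 powr p) * t powr \<sigma>"
    using eq[OF t(1)] by (simp add: mult.commute)
qed (use pos[of 1] assms in auto)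

end

context halfline begin

lemma caseC: assumes p0: "p \<ge> 0" and s1: "-2 < \<sigma>" and s2: "\<sigma> < -1" and ps: "p \<ge> -1 - \<sigma>"
  shows False
proof -
  define K where "K = -\<sigma> - 1"
  have K: "K > 0" using s2 by (simp add: K_def)
  have key: "x powr (\<sigma> + 2) \<le> K * u x powr (1 - p)" if x: "x \<ge> 1" for x
  proof -
    have xp: "x > 0" using x by simp
    have ux: "u x > 0" using pos[OF xp] .
    have c: "u x powr p > 0" using ux by simp
    have "d x \<ge> u x powr p * x powr (\<sigma> + 1) / (- \<sigma> - 1)"
    proof (rule conv_inf[of x "u x powr p" \<sigma> d dd])
      fix t assume t: "x \<le> t"
      then have tp: "t > 0" using xp by simp
      show "(d has_real_derivative dd t) (at t)" using der2 tp by simp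
      show "d t > 0" using dpos tp by simp
      have "u x powr p \<le> u t powr p"
        using powr_mono2[of p "u x" "u t"] p0 umono[OF xp t] ux by simp
      then have "t powr \<sigma> * u x powr p \<le> t powr \<sigma> * u t powr p"
        by (intro mult_left_mono) auto
      then show "dd t \<le> - (u x powr p) * t powr \<sigma>"
        using eq[OF tp] by (simp add: mult.commute)
    qed (use xp c s2 in auto)
    then have "x * d x \<ge> x * (u x powr p * x powr (\<sigma> + 1) / (- \<sigma> - 1))"
      using xp by (intro mult_left_mono) auto
    also have "x * (u x powr p * x powr (\<sigma> + 1) / (- \<sigma> - 1)) = u x powr p * (x * x powr (\<sigma> + 1)) / K"
      by (simp add: K_def algebra_simps)
    also have "x * x powr (\<sigma> + 1) = x powr (1 + (\<sigma> + 1))"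
      using xp by (simp add: powr_mult_base)
    also have "1 + (\<sigma> + 1) = \<sigma> + 2" by simp
    finally have "u x powr p * x powr (\<sigma> + 2) / K \<le> u x" using g0[OF xp] by simp
    then have "x powr (\<sigma> + 2) \<le> K * u x / u x powr p"
      using K c by (simp add: field_simps)
    also have "K * u x / u x powr p = K * u x powr (1 - p)"
      using ux by (simp add: powr_diff)
    finally show ?thesis .
  qed
  show False
  proof (cases "p \<ge> 1")
    case True
    have bnd: "x powr (\<sigma> + 2) \<le> K * u 1 powr (1 - p)" if x: "x \<ge> 1" for x
    proof -
      have "u x powr (1 - p) \<le> u 1 powr (1 - p)"
        using powr_mono2'[of "1 - p" "u 1" "u x"] True pos[of 1] umono[of 1 x] x by simp
      then show ?thesis using key[OF x] K by (smt (verit) mult_left_mono)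
    qed
    obtain x where x: "x \<ge> 1" "x > 0" "x powr (\<sigma> + 2) \<ge> K * u 1 powr (1 - p) + 1"
      using powr_big_at_top[of "\<sigma> + 2" 1] s1 by auto
    then show False using bnd[OF x(1)] by simp
  next
    case False
    define q where "q = 1 / (1 - p)"
    have q: "q > 0" using False by (simp add: q_def)
    define a where "a = (\<sigma> + 2) * q"
    have a1: "a \<ge> 1" using False ps by (simp add: a_def q_def field_simps)
    define L where "L = 1 / K powr q"
    have L: "L > 0" using K by (simp add: L_def)
    have lb: "u x \<ge> L * x powr a" if x: "x \<ge> 1" for x
    proof -
      have xp: "x > 0" using x by simp
      have "(x powr (\<sigma> + 2)) powr q \<le> (K * u x powr (1 - p)) powr q"
        using key[OF x] q by (intro powr_mono2) auto
      also have "(K * u x powr (1 - p)) powr q = K powr q * u x"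
        using K pos[OF xp] False
        by (simp add: powr_mult powr_powr q_def)
      finally have "x powr a \<le> K powr q * u x" by (simp add: powr_powr a_def)
      then show ?thesis using K by (simp add: L_def field_simps)
    qed
    show False
    proof (rule div_inf[of 1 "L powr p" "\<sigma> + a * p" d dd])
      fix t :: real assume t: "1 \<le> t"
      then have tp: "t > 0" by simp
      show "(d has_real_derivative dd t) (at t)" using der2 tp by simp
      show "d t > 0" using dpos tp by simp
      have "(L * t powr a) powr p \<le> u t powr p"
        using powr_mono2[of p "L * t powr a" "u t"] p0 lb[OF t] L by simp
      then have "t powr \<sigma> * (L * t powr a) powr p \<le> t powr \<sigma> * u t powr p"
        by (intro mult_left_mono) auto
      moreover have "t powr \<sigma> * (L * t powr a) powr p = L powr p * t powr (\<sigma> + a * p)"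
        using L tp by (simp add: powr_mult powr_powr powr_add)
      ultimately show "dd t \<le> - (L powr p) * t powr (\<sigma> + a * p)"
        using eq[OF tp] by simp
    next
      have "a * p \<ge> 1 * p" using a1 p0 by (intro mult_right_mono) auto
      then show "\<sigma> + a * p \<ge> -1" using ps by simp
    qed (use L in auto)
  qed
qed

lemma caseD1: assumes s: "\<sigma> = -2" and p1: "p > 1" shows False
proof -
  have ule: "u x \<le> 1" if x: "x \<ge> 1" for x
  proof -
    have xp: "x > 0" using x by simp
    have ux: "u x > 0" using pos[OF xp] .
    have c: "u x powr p > 0" using ux by simp
    have "d x \<ge> u x powr p * x powr (\<sigma> + 1) / (- \<sigma> - 1)"
    proof (rule conv_inf[of x "u x powr p" \<sigma> d dd])
      fix t assume t: "x \<le> t"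
      then have tp: "t > 0" using xp by simp
      show "(d has_real_derivative dd t) (at t)" using der2 tp by simp
      show "d t > 0" using dpos tp by simp
      have "u x powr p \<le> u t powr p"
        using powr_mono2[of p "u x" "u t"] p1 umono[OF xp t] ux by simp
      then have "t powr \<sigma> * u x powr p \<le> t powr \<sigma> * u t powr p"
        by (intro mult_left_mono) auto
      then show "dd t \<le> - (u x powr p) * t powr \<sigma>"
        using eq[OF tp] by (simp add: mult.commute)
    qed (use xp c s in auto)
    then have "x * d x \<ge> x * (u x powr p * x powr (\<sigma> + 1) / (- \<sigma> - 1))"
      using xp by (intro mult_left_mono) auto
    also have "x * (u x powr p * x powr (\<sigma> + 1) / (- \<sigma> - 1)) = u x powr p"
      using xp s by (simp add: powr_mult_base[symmetric] algebra_simps)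
    finally have le: "u x powr p \<le> u x" using g0[OF xp] by simp
    show "u x \<le> 1"
    proof (rule ccontr)
      assume "\<not> u x \<le> 1"
      then have "u x powr 1 < u x powr p" using p1 by (intro powr_less_mono) auto
      then show False using le ux by simp
    qed
  qed
  define c where "c = u 1 powr p"
  have c: "c > 0" using pos[of 1] by (simp add: c_def)
  define F where "F x = x * d x - u x + c * ln x" for x
  have Fm: "F x \<le> F 1" if x: "x \<ge> 1" for x
  proof (rule DERIV_nonpos_imp_nonincreasing[OF x])
    fix t assume t: "1 \<le> t" "t \<le> x"
    then have tp: "t > 0" by simp
    have "(F has_real_derivative (d t + t * dd t) - d t + c * (1 / t)) (at t)"
      unfolding F_def using tp der1[OF tp] der2[OF tp]
      by (auto intro!: derivative_eq_intros)
    moreover have "t * dd t = - (u t powr p / t)"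
    proof -
      have "t * t powr \<sigma> = t powr (-1)" using tp s by (simp add: powr_mult_base)
      also have "\<dots> = 1 / t" using tp by (simp add: powr_minus_divide)
      finally have h: "t * t powr \<sigma> = 1 / t" .
      show ?thesis using eq[OF tp] h by (simp add: mult.assoc[symmetric])
    qed
    moreover have "c \<le> u t powr p"
      unfolding c_def using powr_mono2[of p "u 1" "u t"] p1 umono[of 1 t] t pos[of 1] by simp
    ultimately show "\<exists>z. (F has_real_derivative z) (at t) \<and> z \<le> 0"
      using tp by (intro exI[of _ "(d t + t * dd t) - d t + c * (1 / t)"]) (auto simp: field_simps)
  qed
  define x where "x = max 1 (exp ((d 1 + 1) / c))"
  have x: "x \<ge> 1" "x > 0" by (auto simp: x_def)
  have "ln x \<ge> (d 1 + 1) / c" using x by (simp add: x_def ln_ge_iff)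
  then have cl: "c * ln x \<ge> d 1 + 1" using c by (simp add: field_simps)
  have "x * d x > 0" using x dpos[of x] by simp
  moreover have "x * d x \<le> d 1 - u 1 + u x - c * ln x"
    using Fm[OF x(1)] by (simp add: F_def)
  ultimately show False using cl ule[OF x(1)] pos[of 1] by simp
qed

end

context halfline begin

lemma lbF: assumes p0: "p \<ge> 0" and s: "0 < s" "s \<le> y"
  shows "dd s \<le> - ((u y / y) powr p) * s powr (\<sigma> + p)"
proof -
  have yp: "y > 0" using s by simp
  have "u y / y \<le> u s / s" using vmono[OF s] .
  then have "s * (u y / y) \<le> u s" using s by (simp add: field_simps)
  then have "(s * (u y / y)) powr p \<le> u s powr p"
    using powr_mono2[of p "s * (u y / y)" "u s"] p0 s pos[OF yp] by simp
  then have "s powr \<sigma> * (s * (u y / y)) powr p \<le> s powr \<sigma> * u s powr p"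
    by (intro mult_left_mono) auto
  moreover have "s powr \<sigma> * (s * (u y / y)) powr p = (u y / y) powr p * s powr (\<sigma> + p)"
  proof -
    have pm: "(s * (u y / y)) powr p = s powr p * (u y / y) powr p"
      by (rule powr_mult)
    show ?thesis unfolding pm by (simp add: powr_add mult_ac)
  qed
  ultimately show ?thesis using eq[OF s(1)] by simp
qed

lemma caseF: assumes s2: "\<sigma> \<le> -2" and p0: "0 < p" and ps: "p \<le> -1 - \<sigma>"
    and nd: "\<not> (\<sigma> = -2 \<and> p \<ge> 1)"
  shows False
proof -
  consider "\<sigma> + p \<le> -2" | "-2 < \<sigma> + p" "\<sigma> + p < -1" | "\<sigma> + p = -1" using ps by linarith
  then show False
  proof cases
    case 1
    show False
    proof (rule div_zero[of 1 "(u 1 / 1) powr p" "\<sigma> + p" u d dd])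
      fix t :: real assume t: "0 < t" "t \<le> 1"
      show "(u has_real_derivative d t) (at t)" using der1 t by simp
      show "(d has_real_derivative dd t) (at t)" using der2 t by simp
      show "u t > 0" using pos t by simp
      show "dd t \<le> - ((u 1 / 1) powr p) * t powr (\<sigma> + p)" using lbF[of t 1] p0 t by simp
    qed (use pos[of 1] 1 in auto)
  next
    case 2
    define B where "B = \<sigma> + p + 2"
    define e where "e = \<sigma> + p + 1"
    have B: "B > 0" using 2 by (simp add: B_def)
    have e: "e < 0" using 2 by (simp add: e_def)
    have key2: "y powr e < B * (u y / y) powr (1 - p)" if y: "0 < y" "y \<le> 1" for y
    proof -
      define V where "V = u y / y"
      have V: "V > 0" using pos[OF y(1)] y by (simp add: V_def)
      have cz: "u y - y * d y \<ge> V powr p * (y powr (\<sigma> + p + 2) / (\<sigma> + p + 2))"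
        unfolding V_def
      proof (rule conv_zero[of y "(u y / y) powr p" "\<sigma> + p" u d dd])
        fix t assume t: "0 < t" "t \<le> y"
        show "(u has_real_derivative d t) (at t)" using der1 t by simp
        show "(d has_real_derivative dd t) (at t)" using der2 t by simp
        show "t * d t \<le> u t" using g0 t by simp
        show "dd t \<le> - ((u y / y) powr p) * t powr (\<sigma> + p)" using lbF[of t y] p0 t by simp
      qed (use y pos[of y] 2 in auto)
      have ydp: "y * d y > 0" using y dpos[OF y(1)] by simp
      have yB: "y powr (\<sigma> + p + 2) = y * y powr e"
        using y by (simp add: powr_mult_base e_def add.commute add.left_commute)
      have uy: "u y = y * V" using y by (simp add: V_def)
      have "V powr p * (y * y powr e) / B < y * V"
        using cz ydp yB uy by (simp add: B_def)
      then have "y * (V powr p * y powr e) < y * (B * V)"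
        using B by (simp add: field_simps)
      then have "V powr p * y powr e < B * V" using y by simp
      then have "y powr e < B * V / V powr p" using V by (simp add: field_simps)
      also have "B * V / V powr p = B * V powr (1 - p)" using V by (simp add: powr_diff)
      finally show ?thesis by (simp add: V_def)
    qed
    show False
    proof (cases "p \<ge> 1")
      case True
      have bnd: "y powr e < B * u 1 powr (1 - p)" if y: "0 < y" "y \<le> 1" for y
      proof -
        have "u 1 \<le> u y / y" using vmono[OF y] by simp
        then have "(u y / y) powr (1 - p) \<le> u 1 powr (1 - p)"
          using powr_mono2'[of "1 - p" "u 1" "u y / y"] True pos[of 1] by simp
        then show ?thesis using key2[OF y] B by (smt (verit) mult_left_mono)
      qed
      obtain y where y: "0 < y" "y \<le> 1" "y powr e \<ge> B * u 1 powr (1 - p)"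
        using powr_big_at_zero[OF e, of 1] by auto
      then show False using bnd[OF y(1,2)] by simp
    next
      case False
      define q where "q = 1 / (1 - p)"
      have q: "q > 0" using False by (simp add: q_def)
      define K where "K = 1 / B powr q"
      have K: "K > 0" using B by (simp add: K_def)
      have ex: "1 + e * q = (\<sigma> + 2) * q" using False by (simp add: q_def e_def field_simps)
      have exn: "1 + e * q \<le> 0" unfolding ex using q s2 by (intro mult_nonpos_nonneg) auto
      have lbK: "u y \<ge> K" if y: "0 < y" "y \<le> 1" for y
      proof -
        define V where "V = u y / y"
        have V: "V > 0" using pos[OF y(1)] y by (simp add: V_def)
        have "(y powr e) powr q \<le> (B * V powr (1 - p)) powr q"
          using key2[OF y] q by (intro powr_mono2) (auto simp: V_def)
        also have "(B * V powr (1 - p)) powr q = B powr q * V"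
          using B V False by (simp add: powr_mult powr_powr q_def)
        finally have "y powr (e * q) \<le> B powr q * V" by (simp add: powr_powr)
        then have "y * y powr (e * q) \<le> y * (B powr q * V)" using y by (intro mult_left_mono) auto
        moreover have "y * y powr (e * q) = y powr (1 + e * q)" using y by (simp add: powr_mult_base)
        moreover have "y * (B powr q * V) = B powr q * u y" using y by (simp add: V_def)
        moreover have "1 \<le> y powr (1 + e * q)"
          using powr_mono2'[of "1 + e * q" y 1] exn y by simp
        ultimately have "1 \<le> B powr q * u y" by linarith
        then show ?thesis using B by (simp add: K_def field_simps)
      qed
      show False
      proof (rule div_zero[of 1 "K powr p" \<sigma> u d dd])
        fix t :: real assume t: "0 < t" "t \<le> 1"
        show "(u has_real_derivative d t) (at t)" using der1 t by simp
        show "(d has_real_derivative dd t) (at t)" using der2 t by simp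
        show "u t > 0" using pos t by simp
        have "K powr p \<le> u t powr p"
          using powr_mono2[of p K "u t"] p0 lbK[OF t] K by simp
        then have "t powr \<sigma> * K powr p \<le> t powr \<sigma> * u t powr p"
          by (intro mult_left_mono) auto
        then show "dd t \<le> - (K powr p) * t powr \<sigma>"
          using eq[OF t(1)] by (simp add: mult.commute)
      qed (use K s2 in auto)
    qed
  next
    case 3
    have p1: "p > 1" using 3 nd s2 by auto
    have vlt: "u y / y < 1" if y: "0 < y" for y
    proof -
      define V where "V = u y / y"
      have V: "V > 0" using pos[OF y] y by (simp add: V_def)
      have cz: "u y - y * d y \<ge> V powr p * (y powr (\<sigma> + p + 2) / (\<sigma> + p + 2))"
        unfolding V_def
      proof (rule conv_zero[of y "(u y / y) powr p" "\<sigma> + p" u d dd])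
        fix t assume t: "0 < t" "t \<le> y"
        show "(u has_real_derivative d t) (at t)" using der1 t by simp
        show "(d has_real_derivative dd t) (at t)" using der2 t by simp
        show "t * d t \<le> u t" using g0 t by simp
        show "dd t \<le> - ((u y / y) powr p) * t powr (\<sigma> + p)" using lbF[of t y] p1 t by simp
      qed (use y pos[of y] 3 in auto)
      have ydp: "y * d y > 0" using y dpos[OF y] by simp
      have "V powr p * y < y * V" using cz ydp 3 y by (simp add: V_def)
      then have lt: "V powr p < V" using y by (simp add: mult.commute)
      show ?thesis
      proof (rule ccontr)
        assume "\<not> u y / y < 1"
        then have "V powr 1 \<le> V powr p" using p1 by (intro powr_mono) (auto simp: V_def)
        then show False using lt V by simp
      qed
    qed
    define c where "c = u 1 powr p"
    have c: "c > 0" using pos[of 1] by (simp add: c_def)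
    define G where "G x = d x + c * ln x" for x
    have Gm: "G 1 \<le> G y" if y: "0 < y" "y \<le> 1" for y
    proof (rule DERIV_nonpos_imp_nonincreasing[OF y(2)])
      fix t assume t: "y \<le> t" "t \<le> 1"
      then have tp: "t > 0" using y by simp
      have "(G has_real_derivative dd t + c * (1 / t)) (at t)"
        unfolding G_def using tp der2[OF tp] by (auto intro!: derivative_eq_intros)
      moreover have "dd t \<le> - ((u t / t) powr p) * t powr (\<sigma> + p)" using lbF[of t t] p1 tp by simp
      moreover have "t powr (\<sigma> + p) = 1 / t" using 3 tp by (simp add: powr_minus_divide)
      moreover have "c \<le> (u t / t) powr p"
        unfolding c_def using powr_mono2[of p "u 1" "u t / t"] p1 vmono[of t 1] t tp pos[of 1] by simp
      ultimately show "\<exists>z. (G has_real_derivative z) (at t) \<and> z \<le> 0"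
        using tp by (intro exI[of _ "dd t + c * (1 / t)"]) (auto simp: field_simps)
    qed
    define y where "y = exp (- 1 / c)"
    have y: "0 < y" "y \<le> 1" using c by (auto simp: y_def)
    have "c * ln y = -1" using c by (simp add: y_def)
    then have "d y \<ge> d 1 + 1" using Gm[OF y] by (simp add: G_def)
    moreover have "d y \<le> u y / y" using g0[OF y(1)] y by (simp add: field_simps)
    ultimately show False using vlt[OF y(1)] dpos[of 1] by simp
  qed
qed

end

definition kk :: real where "kk = sqrt 3 / 2"
definition zf :: "real \<Rightarrow> real" where "zf x = sqrt x * sin (kk * ln x)"
definition zf1 :: "real \<Rightarrow> real" where "zf1 x = (sin (kk * ln x) / 2 + kk * cos (kk * ln x)) / sqrt x"
definition zf2 :: "real \<Rightarrow> real" where "zf2 x = - sin (kk * ln x) / (x * sqrt x)"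

lemma alg: fixes x r k S C :: real
  assumes "r > 0" "r * r = x" "k * k = 3/4"
  shows "((C * (k * (1 / x)) / 2 + k * (- S * (k * (1 / x)))) * r - (S / 2 + k * C) * (inverse r / 2)) / (r * r) = - S / (x * r)"
  using assms(1,3) unfolding assms(2)[symmetric]
  by (simp add: field_simps)

lemma kk2: "kk * kk = 3 / 4"
  by (simp add: kk_def)

lemma kkpos: "kk > 0" by (simp add: kk_def)

lemma zf_deriv: assumes x: "x > 0" shows "(zf has_real_derivative zf1 x) (at x)"
proof -
  have s: "sqrt x > 0" "sqrt x * sqrt x = x" using x by auto
  have "(zf has_real_derivative inverse (sqrt x) / 2 * sin (kk * ln x) + sqrt x * (cos (kk * ln x) * (kk * (1 / x)))) (at x)"
    unfolding zf_def using x by (auto intro!: derivative_eq_intros)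
  moreover have "inverse (sqrt x) / 2 * sin (kk * ln x) + sqrt x * (cos (kk * ln x) * (kk * (1 / x))) = zf1 x"
    unfolding zf1_def using s x
    by (simp add: field_simps)
  ultimately show ?thesis by simp
qed

lemma zf1_deriv: assumes x: "x > 0" shows "(zf1 has_real_derivative zf2 x) (at x)"
proof -
  have s: "sqrt x > 0" "sqrt x * sqrt x = x" using x by auto
  define S where "S = sin (kk * ln x)"
  define C where "C = cos (kk * ln x)"
  have "(zf1 has_real_derivative
     ((cos (kk * ln x) * (kk * (1 / x)) / 2 + kk * (- sin (kk * ln x) * (kk * (1 / x)))) * sqrt x
      - (sin (kk * ln x) / 2 + kk * cos (kk * ln x)) * (inverse (sqrt x) / 2)) / (sqrt x * sqrt x)) (at x)"
    unfolding zf1_def using x by (auto intro!: derivative_eq_intros simp: mult_ac)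
  moreover have "((cos (kk * ln x) * (kk * (1 / x)) / 2 + kk * (- sin (kk * ln x) * (kk * (1 / x)))) * sqrt x
      - (sin (kk * ln x) / 2 + kk * cos (kk * ln x)) * (inverse (sqrt x) / 2)) / (sqrt x * sqrt x) = zf2 x"
    unfolding zf2_def by (rule alg) (use s kk2 in auto)
  ultimately show ?thesis by simp
qed

context halfline begin

lemma caseD2: assumes s: "\<sigma> = -2" and p1: "p = 1" shows False
proof -
  define W where "W x = u x * zf1 x - d x * zf x" for x
  have ddx: "dd x = - (u x / (x * x))" if x: "x > 0" for x
  proof -
    have "x powr \<sigma> = 1 / (x * x)" using x s
      by (simp add: powr_minus_divide powr_numeral power2_eq_square)
    then show ?thesis using eq[OF x] p1 pos[OF x] by simp
  qed
  have Wd: "(W has_real_derivative 0) (at x)" if x: "x > 0" for x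
  proof -
    have s: "sqrt x > 0" "sqrt x * sqrt x = x" using x by auto
    have "(W has_real_derivative d x * zf1 x + u x * zf2 x - (dd x * zf x + d x * zf1 x)) (at x)"
      unfolding W_def using x der1[OF x] der2[OF x] zf_deriv[OF x] zf1_deriv[OF x]
      by (auto intro!: derivative_eq_intros)
    moreover have "d x * zf1 x + u x * zf2 x - (dd x * zf x + d x * zf1 x) = 0"
    proof -
      have "u x * zf2 x - dd x * zf x = u x * (- sin (kk * ln x) / (x * sqrt x)) + u x / (x * x) * (sqrt x * sin (kk * ln x))"
        using ddx[OF x] by (simp add: zf2_def zf_def)
      also have "\<dots> = 0" using s x by (simp add: field_simps)
      finally show ?thesis by simp
    qed
    ultimately show ?thesis by simp
  qed
  define X where "X = exp (pi / kk)"
  have X: "X > 1" using kkpos by (simp add: X_def)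
  have "W 1 = W X"
  proof -
    have "W X \<le> W 1"
      using X by (intro DERIV_nonpos_imp_nonincreasing[of 1 X W]) (auto intro!: exI[of _ 0] Wd)
    moreover have "W 1 \<le> W X"
      using X by (intro DERIV_nonneg_imp_nondecreasing[of 1 X W]) (auto intro!: exI[of _ 0] Wd)
    ultimately show ?thesis by simp
  qed
  moreover have "W 1 > 0" using pos[of 1] kkpos by (simp add: W_def zf_def zf1_def)
  moreover have "W X < 0"
  proof -
    have "kk * ln X = pi" using kkpos by (simp add: X_def)
    then have "W X = - u X * kk / sqrt X" by (simp add: W_def zf_def zf1_def)
    then show ?thesis using pos[of X] X kkpos by (simp add: divide_neg_pos)
  qed
  ultimately show False by simp
qed

end

lemma (in halfline) main:
  assumes N: "(\<sigma> \<le> -2 \<and> p \<le> -1 - \<sigma>) \<or> (\<sigma> \<ge> -2 \<and> p \<ge> -1 - \<sigma>)"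
  shows False
proof -
  consider "p < 0" "\<sigma> + p \<ge> -1" | "p \<ge> 0" "\<sigma> \<ge> -1"
    | "p \<ge> 0" "-2 < \<sigma>" "\<sigma> < -1" "p \<ge> -1 - \<sigma>" | "\<sigma> = -2" "p > 1" | "\<sigma> = -2" "p = 1"
    | "p \<le> 0" "\<sigma> \<le> -2" | "\<sigma> \<le> -2" "0 < p" "p \<le> -1 - \<sigma>" "\<not> (\<sigma> = -2 \<and> p \<ge> 1)"
    using N by linarith
  then show False
    by cases (use caseA caseB caseC caseD1 caseD2 caseE caseF in blast)+
qed

lemma cont_right:
  fixes u :: "real \<Rightarrow> real"
  assumes "continuous_on UNIV u"
  shows "(u \<longlongrightarrow> u 0) (at_right 0)"
proof -
  have "isCont u 0" using assms by (simp add: continuous_on_eq_continuous_at)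
  then have "(u \<longlongrightarrow> u 0) (at 0)" by (simp add: isCont_def)
  then show ?thesis by (simp add: filterlim_at_split)
qed

lemma prep:
  fixes u :: "real \<Rightarrow> real"
  assumes cs: "classical_solution \<sigma> p u" and s: "\<sigma> < 0" and nn: "\<And>x. u x \<ge> 0"
    and x0: "x0 > 0" "u x0 > 0"
  shows "\<exists>d dd. halfline u d dd \<sigma> p"
proof -
  obtain d dd where H: "\<forall>x \<in> sol_domain \<sigma>. (u has_real_derivative d x) (at x) \<and>
        (d has_real_derivative dd x) (at x) \<and> isCont dd x \<and> (p < 0 \<longrightarrow> u x > 0) \<and>
        - dd x = weight \<sigma> x * upow (u x) p" and cu: "continuous_on UNIV u"
    using cs unfolding classical_solution_def by blast
  have dom: "x \<in> sol_domain \<sigma>" if "x > 0" for x using s that by (simp add: sol_domain_def)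
  have der1: "(u has_real_derivative d x) (at x)" if "0 < x" for x using H dom[OF that] by blast
  have der2: "(d has_real_derivative dd x) (at x)" if "0 < x" for x using H dom[OF that] by blast
  have eq0: "- dd x = x powr \<sigma> * upow (u x) p" if x: "0 < x" for x
    using H dom[OF x] s x by (simp add: weight_def)
  have ddle: "dd x \<le> 0" if x: "0 < x" for x
  proof -
    have "upow (u x) p \<ge> 0" by (simp add: upow_def)
    then have "x powr \<sigma> * upow (u x) p \<ge> 0" by simp
    then show ?thesis using eq0[OF x] by simp
  qed
  have tang: "u b \<le> u a + d a * (b - a)" "u a \<le> u b + d b * (a - b)" if "0 < a" "a \<le> b" for a b
    using concave_tangent[of a b u d dd] that der1 der2 ddle by auto
  have dnn: "d x \<ge> 0" if x: "x > 0" for x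
  proof (rule ccontr)
    assume "\<not> d x \<ge> 0" then have dn: "d x < 0" by simp
    define t where "t = x + (u x + 1) / (- d x)"
    have "(u x + 1) / (- d x) \<ge> 0" using dn nn[of x] by (intro divide_nonneg_pos) auto
    then have t: "x \<le> t" by (simp add: t_def)
    have "d x * (t - x) = - (u x + 1)" using dn by (simp add: t_def)
    then have "u t \<le> -1" using tang(1)[OF x t] by simp
    then show False using nn[of t] by simp
  qed
  have umono: "u a \<le> u b" if "0 < a" "a \<le> b" for a b
    using DERIV_nonneg_imp_nondecreasing[of a b u] that der1 dnn
    by (metis less_le_trans)
  have upos: "u x > 0" if x: "x > 0" for x
  proof (rule ccontr)
    assume "\<not> u x > 0" then have ux: "u x = 0" using nn[of x] by simp
    have xx0: "x < x0"
    proof (rule ccontr)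
      assume "\<not> x < x0" then have "u x0 \<le> u x" using umono x0 by simp
      then show False using ux x0 by simp
    qed
    have zero: "u w = 0" if "0 < w" "w \<le> x" for w
      using umono[OF that] ux nn[of w] by simp
    define z where "z = x / 2"
    have z: "0 < z" "z < x" using x by (auto simp: z_def)
    have dz: "d z = 0"
    proof (rule DERIV_local_const[OF der1[OF z(1)] z(1)])
      show "\<forall>y. \<bar>z - y\<bar> < z \<longrightarrow> u z = u y"
      proof (intro allI impI)
        fix y assume "\<bar>z - y\<bar> < z"
        then have "0 < y" "y \<le> x" using z by (auto simp: z_def abs_if split: if_splits)
        then show "u z = u y" using zero[of y] zero[of z] z by simp
      qed
    qed
    have "u x0 \<le> u z + d z * (x0 - z)" using tang(1)[of z x0] z xx0 by simp
    then show False using dz zero[of z] z x0 by simp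
  qed
  have upw: "upow (u x) p = u x powr p" if x: "x > 0" for x
    using upos[OF x] by (simp add: upow_def)
  have eq: "dd x = - (x powr \<sigma> * u x powr p)" if x: "0 < x" for x
    using eq0[OF x] upw[OF x] by simp
  have ddneg: "dd x < 0" if x: "0 < x" for x
    using eq[OF x] upos[OF x] x by simp
  have dpos: "d x > 0" if x: "x > 0" for x
  proof (rule ccontr)
    assume "\<not> d x > 0"
    moreover have "d (x + 1) < d x"
      using x by (intro DERIV_neg_imp_decreasing[of x "x + 1" d]) (auto intro!: exI[of _ "dd _"] der2 ddneg)
    ultimately show False using dnn[of "x + 1"] x by simp
  qed
  have g0: "x * d x \<le> u x" if x: "x > 0" for x
  proof -
    have lim1: "(u \<longlongrightarrow> u 0) (at_right 0)" using cont_right[OF cu] .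
    have lim2: "((\<lambda>s. u x + d x * (s - x)) \<longlongrightarrow> u x + d x * (0 - x)) (at_right 0)"
      by (intro tendsto_intros)
    have "u 0 \<le> u x + d x * (0 - x)"
    proof (rule tendsto_le[OF _ lim2 lim1])
      have ev: "\<forall>\<^sub>F s in at_right 0. 0 < s \<and> s < x"
        using x by (auto simp: eventually_at_right_field intro!: exI[of _ x])
      show "\<forall>\<^sub>F s in at_right 0. u s \<le> u x + d x * (s - x)"
        using ev by eventually_elim (use tang(2) in auto)
    qed simp
    then show ?thesis using nn[of 0] by (simp add: mult.commute)
  qed
  have "halfline u d dd \<sigma> p"
    by unfold_locales (use der1 der2 upos dpos g0 eq in auto)
  then show ?thesis by blast
qed

lemma reflect:
  assumes cs: "classical_solution \<sigma> p u"
  shows "classical_solution \<sigma> p (\<lambda>x. u (- x))"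
proof -
  obtain d dd where H: "\<forall>x \<in> sol_domain \<sigma>. (u has_real_derivative d x) (at x) \<and>
        (d has_real_derivative dd x) (at x) \<and> isCont dd x \<and> (p < 0 \<longrightarrow> u x > 0) \<and>
        - dd x = weight \<sigma> x * upow (u x) p" and cu: "continuous_on UNIV u"
    using cs unfolding classical_solution_def by blast
  have dom: "- x \<in> sol_domain \<sigma> \<longleftrightarrow> x \<in> sol_domain \<sigma>" for x by (simp add: sol_domain_def)
  show ?thesis unfolding classical_solution_def
  apply (rule conjI)
   prefer 2
   apply (rule exI[of _ "\<lambda>x. - d (- x)"], rule exI[of _ "\<lambda>x. dd (- x)"])
  proof (intro ballI conjI)
    show "continuous_on UNIV (\<lambda>x. u (- x))"
      by (rule continuous_on_compose2[OF cu]) (auto intro!: continuous_intros)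
    fix x assume x: "x \<in> sol_domain \<sigma>"
    then have Hx: "(u has_real_derivative d (- x)) (at (- x))" "(d has_real_derivative dd (- x)) (at (- x))"
      "isCont dd (- x)" "p < 0 \<longrightarrow> u (- x) > 0" "- dd (- x) = weight \<sigma> (- x) * upow (u (- x)) p"
      using H dom[of x] by auto
    show "((\<lambda>x. u (- x)) has_real_derivative - d (- x)) (at x)"
      using Hx(1) DERIV_mirror[of u "d (- x)" x] by simp
    have "((\<lambda>x. d (- x)) has_real_derivative - dd (- x)) (at x)"
      using Hx(2) DERIV_mirror[of d "dd (- x)" x] by simp
    then show "((\<lambda>x. - d (- x)) has_real_derivative dd (- x)) (at x)"
      using DERIV_minus by fastforce
    have c1: "isCont (\<lambda>x. - x) x" by (intro continuous_intros)
    show "isCont (\<lambda>x. dd (- x)) x"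
      using isCont_o2[OF c1, of dd] Hx(3) by simp
    show "p < 0 \<longrightarrow> u (- x) > 0" using Hx(4) .
    show "- dd (- x) = weight \<sigma> x * upow (u (- x)) p"
      using Hx(5) by (simp add: weight_def)
  qed
qed

lemma fullline:
  fixes u :: "real \<Rightarrow> real"
  assumes cs: "classical_solution \<sigma> p u" and s: "\<sigma> \<ge> 0" and nn: "\<And>x. u x \<ge> 0"
    and nz: "\<exists>x. u x \<noteq> 0"
  shows False
proof -
  obtain d dd where H: "\<forall>x \<in> sol_domain \<sigma>. (u has_real_derivative d x) (at x) \<and>
        (d has_real_derivative dd x) (at x) \<and> isCont dd x \<and> (p < 0 \<longrightarrow> u x > 0) \<and>
        - dd x = weight \<sigma> x * upow (u x) p"
    using cs unfolding classical_solution_def by blast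
  have dom: "x \<in> sol_domain \<sigma>" for x using s by (simp add: sol_domain_def)
  have der1: "(u has_real_derivative d x) (at x)" for x using H dom by blast
  have der2: "(d has_real_derivative dd x) (at x)" for x using H dom by blast
  have eq0: "- dd x = weight \<sigma> x * upow (u x) p" for x using H dom by blast
  have ddle: "dd x \<le> 0" for x
  proof -
    have "upow (u x) p \<ge> 0" by (simp add: upow_def)
    moreover have "weight \<sigma> x \<ge> 0" by (simp add: weight_def)
    ultimately show ?thesis using eq0[of x] by (metis neg_0_le_iff_le mult_nonneg_nonneg)
  qed
  have tang: "u b \<le> u a + d a * (b - a)" "u a \<le> u b + d b * (a - b)" if "a \<le> b" for a b
    using concave_tangent[of a b u d dd] that der1 der2 ddle by auto
  have d0: "d y = 0" for y
  proof (rule ccontr)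
    assume "d y \<noteq> 0"
    then consider "d y < 0" | "d y > 0" by linarith
    then show False
    proof cases
      case 1
      define t where "t = y + (u y + 1) / (- d y)"
      have "(u y + 1) / (- d y) \<ge> 0" using 1 nn[of y] by (intro divide_nonneg_pos) auto
      then have t: "y \<le> t" by (simp add: t_def)
      have "d y * (t - y) = - (u y + 1)" using 1 by (simp add: t_def)
      then have "u t \<le> -1" using tang(1)[OF t] by simp
      then show False using nn[of t] by simp
    next
      case 2
      define t where "t = y - (u y + 1) / d y"
      have "(u y + 1) / d y \<ge> 0" using 2 nn[of y] by simp
      then have t: "t \<le> y" by (simp add: t_def)
      have "d y * (t - y) = - (u y + 1)" using 2 by (simp add: t_def)
      then have "u t \<le> -1" using tang(2)[OF t] by simp
      then show False using nn[of t] by simp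
    qed
  qed
  have const: "u x = u 1" for x
    by (rule DERIV_isconst_all) (use der1 d0 in metis)
  have "dd 1 = 0"
  proof -
    have "d = (\<lambda>_. 0)" using d0 by auto
    then have "((\<lambda>_. 0) has_real_derivative dd 1) (at 1)" using der2[of 1] by simp
    then show ?thesis using DERIV_const DERIV_unique by blast
  qed
  moreover have w1: "weight \<sigma> 1 = 1" by (simp add: weight_def)
  ultimately have "upow (u 1) p = 0" using eq0[of 1] by simp
  then have "u 1 = 0" by (simp add: upow_def split: if_splits)
  then show False using nz const by simp
qed

lemma absp: "\<bar>x\<bar> powr r = (x * x) powr (r / 2)" for x r :: real
proof -
  have "(x * x) powr (r / 2) = (\<bar>x\<bar> * \<bar>x\<bar>) powr (r / 2)" by (simp add: abs_mult_self_eq)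
  also have "\<dots> = \<bar>x\<bar> powr (r / 2) * \<bar>x\<bar> powr (r / 2)" by (rule powr_mult)
  also have "\<dots> = \<bar>x\<bar> powr r" by (simp add: powr_add[symmetric])
  finally show ?thesis by simp
qed

lemma exist:
  fixes \<sigma> p :: real
  assumes R: "(\<sigma> < -2 \<and> p > -1 - \<sigma>) \<or> (-2 < \<sigma> \<and> \<sigma> < 0 \<and> p < -1 - \<sigma>)"
  shows "\<exists>u. classical_solution \<sigma> p u \<and> (\<forall>x. u x \<ge> 0) \<and> (\<exists>x. u x \<noteq> 0)"
proof -
  have s: "\<sigma> < 0" "\<sigma> \<noteq> 0" and p1: "1 - p \<noteq> 0" using R by auto
  define a where "a = (\<sigma> + 2) / (1 - p)"
  have a0: "0 < a \<and> a < 1"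
  proof -
    from R consider "\<sigma> < -2" "p > -1 - \<sigma>" | "-2 < \<sigma>" "p < -1 - \<sigma>" by auto
    then show ?thesis
    proof cases
      case 1
      then have n: "1 - p < 0" by simp
      have "0 < a" using 1 n by (simp add: a_def divide_neg_neg)
      moreover have "a < 1" using 1 n by (simp add: a_def divide_less_eq)
      ultimately show ?thesis by simp
    next
      case 2
      then have n: "1 - p > 0" by simp
      have "0 < a" using 2 n by (simp add: a_def)
      moreover have "a < 1" using 2 n by (simp add: a_def divide_less_eq)
      ultimately show ?thesis by simp
    qed
  qed
  then have a: "0 < a" "a < 1" by auto
  have aeq: "a * (1 - p) = \<sigma> + 2" using p1 by (simp add: a_def)
  have ap: "\<sigma> / 2 + a * p / 2 = a / 2 - 1"
  proof -
    have "\<sigma> + a * p = a - 2" using aeq by (simp add: algebra_simps)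
    then show ?thesis by (simp add: field_simps)
  qed
  define b where "b = a * (1 - a)"
  have b: "b > 0" using a by (simp add: b_def)
  define c where "c = b powr (1 / (p - 1))"
  have c: "c > 0" using b by (simp add: c_def)
  have p1': "p - 1 \<noteq> 0" using p1 by simp
  have cp: "c powr p = c * b"
  proof -
    have "c powr p = c powr (1 + (p - 1))" by simp
    also have "\<dots> = c * c powr (p - 1)" using c powr_mult_base[of c "p - 1"] by simp
    also have "c powr (p - 1) = b powr (1 / (p - 1) * (p - 1))" by (simp add: c_def powr_powr)
    also have "\<dots> = b" using p1' b by simp
    finally show ?thesis .
  qed
  define u where "u x = c * (x * x) powr (a / 2)" for x :: real
  define d where "d x = c * a * x * (x * x) powr (a / 2 - 1)" for x :: real
  define dd where "dd x = c * a * (a - 1) * (x * x) powr (a / 2 - 1)" for x :: real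
  have dom: "sol_domain \<sigma> = - {0}" using s by (simp add: sol_domain_def)
  have cs: "classical_solution \<sigma> p u"
    unfolding classical_solution_def
  apply (rule conjI)
   prefer 2
   apply (rule exI[of _ d], rule exI[of _ dd])
  proof (intro ballI conjI)
    show "continuous_on UNIV u"
      unfolding u_def using a by (intro continuous_intros continuous_on_powr') auto
    fix x assume "x \<in> sol_domain \<sigma>"
    then have x: "x \<noteq> 0" using dom by simp
    have X: "x * x > 0" using x by (auto simp: zero_less_mult_iff linorder_neq_iff)
    have "(u has_real_derivative c * (a / 2 * (x * x) powr (a / 2 - 1) * (1 * x + x * 1))) (at x)"
      unfolding u_def using X by (auto intro!: derivative_eq_intros)
    then show "(u has_real_derivative d x) (at x)"
      by (simp add: d_def algebra_simps)
    have "(d has_real_derivative c * a * (1 * (x * x) powr (a / 2 - 1) + x * ((a / 2 - 1) * (x * x) powr (a / 2 - 1 - 1) * (1 * x + x * 1)))) (at x)"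
      unfolding d_def using X by (auto intro!: derivative_eq_intros simp: algebra_simps)
    moreover have "c * a * (1 * (x * x) powr (a / 2 - 1) + x * ((a / 2 - 1) * (x * x) powr (a / 2 - 1 - 1) * (1 * x + x * 1))) = dd x"
    proof -
      have e: "(x * x) * (x * x) powr (a / 2 - 1 - 1) = (x * x) powr (a / 2 - 1)"
        using X by (simp add: powr_mult_base)
      have "x * ((a / 2 - 1) * (x * x) powr (a / 2 - 1 - 1) * (1 * x + x * 1))
          = (a - 2) * ((x * x) * (x * x) powr (a / 2 - 1 - 1))" by (simp add: algebra_simps)
      also have "\<dots> = (a - 2) * (x * x) powr (a / 2 - 1)" using e by simp
      finally have h: "x * ((a / 2 - 1) * (x * x) powr (a / 2 - 1 - 1) * (1 * x + x * 1)) = (a - 2) * (x * x) powr (a / 2 - 1)" .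
      show ?thesis unfolding h dd_def by (simp add: algebra_simps)
    qed
    ultimately show "(d has_real_derivative dd x) (at x)" by simp
    have "continuous_on (- {0}) dd"
      unfolding dd_def by (intro continuous_intros continuous_on_powr') auto
    then show "isCont dd x" using x by (simp add: continuous_on_eq_continuous_at open_Compl)
    have ux: "u x > 0" using c x by (simp add: u_def)
    then show "p < 0 \<longrightarrow> u x > 0" by simp
    have "weight \<sigma> x * upow (u x) p = (x * x) powr (\<sigma> / 2) * u x powr p"
      using s ux by (simp add: weight_def upow_def absp)
    also have "u x powr p = c powr p * (x * x) powr (a * p / 2)"
      by (simp add: u_def powr_mult powr_powr)
    also have "(x * x) powr (\<sigma> / 2) * (c powr p * (x * x) powr (a * p / 2)) = c powr p * (x * x) powr (\<sigma> / 2 + a * p / 2)"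
      by (simp add: powr_add)
    also have "\<dots> = c * b * (x * x) powr (a / 2 - 1)" using cp ap by simp
    also have "\<dots> = - dd x" by (simp add: dd_def b_def algebra_simps)
    finally show "- dd x = weight \<sigma> x * upow (u x) p" by simp
  qed
  moreover have "\<forall>x. u x \<ge> 0" using c by (simp add: u_def)
  moreover have "u 1 \<noteq> 0" using c by (simp add: u_def)
  ultimately show ?thesis by blast
qed

theorem theorem1p2:
  fixes p \<sigma> :: real
  shows "(\<exists>u. classical_solution \<sigma> p u \<and> (\<forall>x. u x \<ge> 0) \<and> (\<exists>x. u x \<noteq> 0)) \<longleftrightarrow>
         ((\<sigma> < -2 \<and> p > -1 - \<sigma>) \<or> (-2 < \<sigma> \<and> \<sigma> < 0 \<and> p < -1 - \<sigma>))"
proof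
  assume "\<exists>u. classical_solution \<sigma> p u \<and> (\<forall>x. u x \<ge> 0) \<and> (\<exists>x. u x \<noteq> 0)"
  then obtain u where cs: "classical_solution \<sigma> p u" and nn: "\<forall>x. u x \<ge> 0" and nz: "\<exists>x. u x \<noteq> 0"
    by blast
  show "(\<sigma> < -2 \<and> p > -1 - \<sigma>) \<or> (-2 < \<sigma> \<and> \<sigma> < 0 \<and> p < -1 - \<sigma>)"
  proof (cases "\<sigma> \<ge> 0")
    case True
    then show ?thesis using fullline[OF cs True] nn nz by blast
  next
    case False
    then have s: "\<sigma> < 0" by simp
    have cu: "continuous_on UNIV u" using cs by (simp add: classical_solution_def)
    obtain w x0 where w: "classical_solution \<sigma> p w" "\<forall>x. w x \<ge> 0" "x0 > 0" "w x0 > 0"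
    proof -
      from nz obtain x where "u x \<noteq> 0" by blast
      then have ux: "u x > 0" using nn by (metis less_eq_real_def)
      consider "x > 0" | "x < 0" | "x = 0" by linarith
      then show ?thesis
      proof cases
        case 1
        then show ?thesis using that[of u x] cs nn ux by blast
      next
        case 2
        then show ?thesis using that[of "\<lambda>y. u (- y)" "- x"] reflect[OF cs] nn ux by simp
      next
        case 3
        have "\<forall>\<^sub>F y in at_right 0. u y > 0"
          using order_tendstoD(1)[OF cont_right[OF cu], of 0] ux 3 by simp
        then obtain b where b: "b > 0" "\<And>y. y > 0 \<Longrightarrow> y < b \<Longrightarrow> u y > 0"
          by (auto simp: eventually_at_right_field)
        then show ?thesis using that[of u "b / 2"] cs nn by simp
      qed
    qed
    obtain d dd where "halfline w d dd \<sigma> p"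
      using prep[of \<sigma> p w x0] w s by blast
    then have "\<not> ((\<sigma> \<le> -2 \<and> p \<le> -1 - \<sigma>) \<or> (\<sigma> \<ge> -2 \<and> p \<ge> -1 - \<sigma>))"
      using halfline.main by blast
    then show ?thesis using s by linarith
  qed
next
  assume "(\<sigma> < -2 \<and> p > -1 - \<sigma>) \<or> (-2 < \<sigma> \<and> \<sigma> < 0 \<and> p < -1 - \<sigma>)"
  then show "\<exists>u. classical_solution \<sigma> p u \<and> (\<forall>x. u x \<ge> 0) \<and> (\<exists>x. u x \<noteq> 0)"
    by (rule exist)
qed


end
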